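(* Let $\lambda>0$ and let $\ell$ be a nondegenerate Hermitian form and $A$ an antilinear operator on a complex $k$-dimensional space, represented in some basis by matrices $H$ and $J_{\lambda,k}$ respectively, where $H$ is a Hankel matrix with $H_{i,j}=0$ for all $i+j\le k$. Then there is a basis with respect to which $\ell$ and $A$ are represented by $\pm S_k$ and $J_{\lambda,k}$ respectively.
   Context: An antilinear operator satisfies $A(zv+w)=\bar zAv+Aw$; $\ell$ is linear in the first argument, conjugate-linear in the second. In a basis $e_1,\dots,e_k$, $\ell$ is represented by $H_{i,j}=\ell(e_j,e_i)$ and $A$ by $C$ with $Ae_i=\sum_m C_{m,i}e_m$; a change of basis with transition matrix $M$ sends $(H,C)$ to $((M^{-1})^*HM^{-1},MC\overline M^{-1})$. $T_k$ has $(i,j)$ entry $1$ if $j-i=1$ and $0$ otherwise; $J_{\lambda,k}=\lambda I_k+T_k$; $S_k$ has $(i,j)$ entry $1$ if $i+j=k+1$ and $0$ otherwise. *)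

theory Defs
  imports Complex_Main "Jordan_Normal_Form.Matrix" "Jordan_Normal_Form.Determinant"
begin

(* Matrices are k x k complex matrices with 0-based indices; the paper's
   1-based conditions are shifted accordingly. *)

definition T_mat :: "nat \<Rightarrow> complex mat" where
  "T_mat k = mat k k (\<lambda>(i,j). if j = i + 1 then 1 else 0)"

definition J_mat :: "complex \<Rightarrow> nat \<Rightarrow> complex mat" where
  "J_mat lam k = lam \<cdot>\<^sub>m 1\<^sub>m k + T_mat k"

definition S_mat :: "nat \<Rightarrow> complex mat" where
  "S_mat k = mat k k (\<lambda>(i,j). if i + j + 1 = k then 1 else 0)"

definition conj_mat :: "complex mat \<Rightarrow> complex mat" where
  "conj_mat A = map_mat cnj A"

definition adj_mat :: "complex mat \<Rightarrow> complex mat" where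
  "adj_mat A = transpose_mat (map_mat cnj A)"

definition hermitian_mat :: "complex mat \<Rightarrow> bool" where
  "hermitian_mat H \<longleftrightarrow> adj_mat H = H"

definition hankel_mat :: "complex mat \<Rightarrow> bool" where
  "hankel_mat H \<longleftrightarrow> (\<forall>i j i' j'. i < dim_row H \<longrightarrow> j < dim_col H \<longrightarrow>
      i' < dim_row H \<longrightarrow> j' < dim_col H \<longrightarrow> i + j = i' + j' \<longrightarrow> H $$ (i,j) = H $$ (i',j'))"

end

theory Submission
  imports Defs "HOL-Computational_Algebra.Formal_Power_Series"
begin

definition Top :: "nat \<Rightarrow> real fps \<Rightarrow> complex mat" where
  "Top k f = mat k k (\<lambda>(i,j). if i \<le> j then complex_of_real (fps_nth f (j - i)) else 0)"

lemma Top_carrier[simp]: "Top k f \<in> carrier_mat k k"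
  by (simp add: Top_def)

lemma Top_dims[simp]: "dim_row (Top k f) = k" "dim_col (Top k f) = k"
  by (simp_all add: Top_def)

lemma Top_index: "i < k \<Longrightarrow> j < k \<Longrightarrow> Top k f $$ (i,j) = (if i \<le> j then complex_of_real (fps_nth f (j - i)) else 0)"
  by (simp add: Top_def)

lemma Top_mult: "Top k f * Top k g = Top k (f * g)"
proof (rule eq_matI)
  fix i j assume i: "i < dim_row (Top k (f*g))" and j: "j < dim_col (Top k (f*g))"
  hence i: "i < k" and j: "j < k" by auto
  have "(Top k f * Top k g) $$ (i,j) =
     (\<Sum>l\<in>{0..<k}. (if i \<le> l then complex_of_real (fps_nth f (l - i)) else 0) *
                    (if l \<le> j then complex_of_real (fps_nth g (j - l)) else 0))"
    using i j by (simp add: scalar_prod_def Top_index)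
  also have "\<dots> = (\<Sum>l\<in>{i..j}. complex_of_real (fps_nth f (l - i) * fps_nth g (j - l)))"
    by (rule sum.mono_neutral_cong_right) (use j in auto)
  also have "\<dots> = (if i \<le> j then complex_of_real (fps_nth (f*g) (j - i)) else 0)"
  proof (cases "i \<le> j")
    case True
    have "(\<Sum>l\<in>{i..j}. complex_of_real (fps_nth f (l - i) * fps_nth g (j - l)))
        = (\<Sum>m\<in>{0..j-i}. complex_of_real (fps_nth f m * fps_nth g (j - i - m)))"
      by (rule sum.reindex_bij_witness[of _ "\<lambda>m. m + i" "\<lambda>l. l - i"]) (use True in auto)
    then show ?thesis using True by (simp add: fps_mult_nth)
  qed simp
  finally show "(Top k f * Top k g) $$ (i,j) = Top k (f*g) $$ (i,j)"
    using i j by (simp add: Top_index)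
qed auto

lemma Top_one: "Top k 1 = 1\<^sub>m k"
  by (rule eq_matI) (auto simp: Top_index)

lemma Top_const: "Top k (fps_const c) = complex_of_real c \<cdot>\<^sub>m 1\<^sub>m k"
  by (rule eq_matI) (auto simp: Top_index)

lemma Top_J: "Top k (fps_const lam + fps_X) = J_mat (complex_of_real lam) k"
  by (rule eq_matI) (auto simp: Top_index J_mat_def T_mat_def)

lemma conj_Top: "conj_mat (Top k f) = Top k f"
  by (rule eq_matI) (auto simp: Top_index conj_mat_def)

lemma adj_Top: "adj_mat (Top k f) = transpose_mat (Top k f)"
  by (rule eq_matI) (auto simp: Top_index adj_mat_def)

lemma S_carrier[simp]: "S_mat k \<in> carrier_mat k k"
  by (simp add: S_mat_def)

lemma sum_delta_aux: fixes c k :: nat assumes "c < k" shows "(\<Sum>l\<in>{0..<k}. x l * (if l = c then 1 else 0)) = (x c :: complex)"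
proof -
  have "(\<Sum>l\<in>{0..<k}. x l * (if l = c then 1 else 0)) = x c * (if c = c then 1 else 0) + (\<Sum>l\<in>{0..<k} - {c}. x l * (if l = c then 1 else 0))"
    by (rule sum.remove) (use assms in auto)
  also have "(\<Sum>l\<in>{0..<k} - {c}. x l * (if l = c then 1 else 0)) = 0"
    by (rule sum.neutral) auto
  finally show ?thesis by simp
qed

lemma transpose_Top_S: "transpose_mat (Top k f) * S_mat k = S_mat k * Top k f"
proof (rule eq_matI)
  fix i j assume "i < dim_row (S_mat k * Top k f)" "j < dim_col (S_mat k * Top k f)"
  hence i: "i < k" and j: "j < k" by (auto simp: S_mat_def)
  have "(transpose_mat (Top k f) * S_mat k) $$ (i,j) =
     (\<Sum>l\<in>{0..<k}. Top k f $$ (l,i) * (if l = k - 1 - j then 1 else 0))"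
    using i j by (auto simp: scalar_prod_def S_mat_def intro!: sum.cong)
  also have "\<dots> = Top k f $$ (k - 1 - j, i)" by (rule sum_delta_aux) (use j in simp)
  also have "\<dots> = Top k f $$ (k - 1 - i, j)" using i j
    by (auto simp: Top_index) (metis add.commute diff_diff_left)+
  also have "\<dots> = (\<Sum>l\<in>{0..<k}. Top k f $$ (l,j) * (if l = k - 1 - i then 1 else 0))"
    by (rule sum_delta_aux[symmetric]) (use i in simp)
  also have "\<dots> = (S_mat k * Top k f) $$ (i,j)"
    using i j by (auto simp: scalar_prod_def S_mat_def intro!: sum.cong)
  finally show "(transpose_mat (Top k f) * S_mat k) $$ (i,j) = (S_mat k * Top k f) $$ (i,j)" .
qed (auto simp: S_mat_def)


lemma S_mult_index: fixes k :: nat assumes "i < k" "j < k" and that: "B \<in> carrier_mat k k"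
  shows "(S_mat k * B) $$ (i,j) = B $$ (k - 1 - i, j)"
proof -
  have "(S_mat k * B) $$ (i,j) = (\<Sum>l\<in>{0..<k}. B $$ (l,j) * (if l = k - 1 - i then 1 else 0))"
    using assms that by (auto simp: scalar_prod_def S_mat_def intro!: sum.cong)
  also have "\<dots> = B $$ (k - 1 - i, j)" by (rule sum_delta_aux) (use assms in simp)
  finally show ?thesis .
qed

lemma Top_det0: assumes "k > 0" "fps_nth f 0 = 0" shows "det (Top k f) = 0"
proof -
  have ut: "upper_triangular (Top k f)" by (auto simp: upper_triangular_def Top_index)
  have "det (Top k f) = prod_list (diag_mat (Top k f))"
    by (rule det_upper_triangular[OF ut Top_carrier])
  also have "\<dots> = 0" unfolding prod_list_zero_iff using assms
    by (auto simp: diag_mat_def Top_index intro!: image_eqI[of _ _ 0])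
  finally show ?thesis .
qed

theorem mainTheorem8:
  fixes k :: nat and lam :: real and H :: "complex mat"
  assumes "lam > 0"
    and "H \<in> carrier_mat k k"
    and "hermitian_mat H"
    and "det H \<noteq> 0"
    and "hankel_mat H"
    and "\<forall>i<k. \<forall>j<k. (i + 1) + (j + 1) \<le> k \<longrightarrow> H $$ (i,j) = 0"
  shows "\<exists>M N. M \<in> carrier_mat k k \<and> N \<in> carrier_mat k k \<and>
           M * N = 1\<^sub>m k \<and> N * M = 1\<^sub>m k \<and>
           (adj_mat N * H * N = S_mat k \<or> adj_mat N * H * N = - S_mat k) \<and>
           M * J_mat (complex_of_real lam) k * conj_mat N = J_mat (complex_of_real lam) k"
proof (cases "k = 0")
  case True
  show ?thesis
    by (rule exI[of _ "1\<^sub>m k"], rule exI[of _ "1\<^sub>m k"])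
      (use True assms(2) in \<open>auto intro!: eq_matI simp: S_mat_def J_mat_def T_mat_def conj_mat_def adj_mat_def\<close>)
next
  case False
  hence k0: "k > 0" by simp
  have Hc: "dim_row H = k" "dim_col H = k" using assms(2) by auto
  have herm: "H $$ (i,j) = cnj (H $$ (j,i))" if "i < k" "j < k" for i j
  proof -
    have "adj_mat H $$ (i,j) = cnj (H $$ (j,i))" using that Hc by (simp add: adj_mat_def)
    thus ?thesis using assms(3) by (simp add: hermitian_mat_def)
  qed
  have hank: "H $$ (i,j) = H $$ (i',j')" if "i < k" "j < k" "i' < k" "j' < k" "i + j = i' + j'" for i j i' j'
    using assms(5) that unfolding hankel_mat_def Hc by blast
  have real: "complex_of_real (Re (H $$ (k - 1, n))) = H $$ (k - 1, n)" if "n < k" for n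
  proof -
    have "H $$ (k - 1, n) = cnj (H $$ (k - 1, n))"
      using herm[of "k - 1" n] hank[of n "k - 1" "k - 1" n] that k0 by simp
    thus ?thesis by (metis complex_is_Real_iff Reals_cnj_iff of_real_Re)
  qed
  define p :: "real fps" where "p = Abs_fps (\<lambda>n. if n < k then Re (H $$ (k - 1, n)) else 0)"
  have pn: "fps_nth p n = (if n < k then Re (H $$ (k - 1, n)) else 0)" for n
    by (simp add: p_def)
  have HS: "H = S_mat k * Top k p"
  proof (rule eq_matI)
    fix i j assume "i < dim_row (S_mat k * Top k p)" "j < dim_col (S_mat k * Top k p)"
    hence i: "i < k" and j: "j < k" by (auto simp: S_mat_def)
    have e: "(S_mat k * Top k p) $$ (i,j) = Top k p $$ (k - 1 - i, j)"
      by (rule S_mult_index) (use i j in auto)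
    show "H $$ (i,j) = (S_mat k * Top k p) $$ (i,j)"
    proof (cases "k - 1 - i \<le> j")
      case True
      define n where "n = j - (k - 1 - i)"
      have n: "n < k" "k - 1 + n = i + j" using True i j k0 by (auto simp: n_def)
      have "Top k p $$ (k - 1 - i, j) = complex_of_real (fps_nth p n)"
        using True i j by (simp add: Top_index n_def)
      also have "\<dots> = H $$ (k - 1, n)" using n real pn by simp
      also have "\<dots> = H $$ (i,j)" using hank[of "k - 1" n i j] n i j k0 by simp
      finally show ?thesis using e by simp
    next
      case False
      hence "H $$ (i,j) = 0" using assms(6) i j by auto
      thus ?thesis using e False i j by (simp add: Top_index)
    qed
  qed (auto simp: Hc S_mat_def)
  have p0: "fps_nth p 0 \<noteq> 0"
  proof
    assume "fps_nth p 0 = 0"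
    hence "det (Top k p) = 0" using Top_det0 k0 by blast
    hence "det H = 0" unfolding HS using det_mult[OF S_carrier Top_carrier] by simp
    thus False using assms(4) by simp
  qed
  define s where "s = sgn (fps_nth p 0)"
  have s: "s = 1 \<or> s = -1" using p0 by (auto simp: s_def sgn_if)
  define a where "a = fps_const s * inverse p"
  have a0: "fps_nth a 0 > 0" using p0
    by (auto simp: a_def s_def sgn_if)
  define q where "q = fps_radical (\<lambda>_ x. sqrt x) 2 a"
  have q2: "q ^ 2 = a"
    using power_radical[of a "\<lambda>_ x. sqrt x" 1] a0 by (simp add: q_def numeral_2_eq_2)
  have q0: "fps_nth q 0 \<noteq> 0" using a0 by (simp add: q_def)
  have qpq: "q * p * q = fps_const s"
  proof -
    have "q * p * q = q^2 * p" by (simp add: power2_eq_square algebra_simps)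
    also have "\<dots> = fps_const s * (inverse p * p)" by (simp add: q2 a_def algebra_simps)
    also have "\<dots> = fps_const s" using inverse_mult_eq_1[OF p0] by simp
    finally show ?thesis .
  qed
  define N where "N = Top k q"
  define M where "M = Top k (inverse q)"
  define j where "j = fps_const lam + fps_X"
  have MN: "M * N = 1\<^sub>m k" unfolding M_def N_def Top_mult
    using inverse_mult_eq_1[OF q0] Top_one by simp
  have NM: "N * M = 1\<^sub>m k" unfolding M_def N_def Top_mult
    using inverse_mult_eq_1'[OF q0] Top_one by simp
  have "adj_mat N * H * N = transpose_mat (Top k q) * (S_mat k * Top k p) * Top k q"
    by (simp add: N_def adj_Top HS)
  also have "\<dots> = (transpose_mat (Top k q) * S_mat k) * Top k p * Top k q"
    by (subst assoc_mult_mat[of _ k k _ k _ k]) auto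
  also have "\<dots> = S_mat k * (Top k q * Top k p * Top k q)"
    unfolding transpose_Top_S
    by (subst assoc_mult_mat[of _ k k _ k _ k], simp_all, subst assoc_mult_mat[of _ k k _ k _ k], simp_all add: Top_mult)
  also have "\<dots> = S_mat k * (complex_of_real s \<cdot>\<^sub>m 1\<^sub>m k)"
    by (simp add: Top_mult qpq Top_const)
  also have "\<dots> = complex_of_real s \<cdot>\<^sub>m S_mat k"
    by (simp add: mult_smult_distrib[OF S_carrier one_carrier_mat] right_mult_one_mat[OF S_carrier])
  finally have adj: "adj_mat N * H * N = complex_of_real s \<cdot>\<^sub>m S_mat k" .
  have adj2: "adj_mat N * H * N = S_mat k \<or> adj_mat N * H * N = - S_mat k"
    using s unfolding adj by (auto intro!: eq_matI simp: S_mat_def)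
  have J: "M * J_mat (complex_of_real lam) k * conj_mat N = J_mat (complex_of_real lam) k"
  proof -
    have "M * J_mat (complex_of_real lam) k * conj_mat N = Top k (inverse q * j * q)"
      unfolding M_def N_def conj_Top Top_J[symmetric] j_def Top_mult ..
    also have "inverse q * j * q = j * (inverse q * q)" by (simp add: algebra_simps)
    also have "\<dots> = j" using inverse_mult_eq_1[OF q0] by simp
    finally show ?thesis by (simp add: j_def Top_J)
  qed
  show ?thesis
    by (rule exI[of _ M], rule exI[of _ N]) (use MN NM adj2 J in \<open>simp add: M_def N_def\<close>)
qed

end
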